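(* Let $G$ be a large scale group having a basis $\{G_i\}_{i\ge1}$ for boundedly generated subgroups consisting of unbounded subgroups. If $m\le\infty$ and each $G_i$ (with the large scale structure induced from $G$) has at most $m$ ends, then $G$ has at most $m$ ends.
   Context: A large scale group is a group $G$ with a bornology $\mathcal B$ (a cover closed under subsets and finite unions) closed under inverses and products; uniformly bounded covers are those refining $\{gB\}_{g\in G}$ for some $B\in\mathcal B$; bounded sets are members of $\mathcal B$. A subgroup $H$ carries the induced large scale group structure with bornology $\{B\in\mathcal B: B\subseteq H\}$. $G$ (or a subgroup) is boundedly generated if it is generated by a bounded symmetric set. A basis for boundedly generated subgroups of $G$ is a sequence $\{G_i\}_{i\ge1}$ of boundedly generated subgroups of $G$ such that every bounded subset of $G$ is contained in some $G_i$ (equivalently, every boundedly generated subgroup lies in some $G_i$). For $A\subseteq G$ and a cover $\mathcal U$, $st(A,\mathcal U)$ is the union of members of $\mathcal U$ meeting $A$; $A$ is coarsely clopen if $st(A,\mathcal U)\cap st(G\setminus A,\mathcal U)$ is bounded for every uniformly bounded $\mathcal U$. An end is a family of unbounded coarsely clopen sets maximal with respect to all finite intersections being unbounded; the number of ends is the cardinality of the set of ends. *)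

theory Defs
  imports "HOL-Algebra.Algebra" "HOL-Library.Extended_Nat"
begin

definition bornology :: "'a set \<Rightarrow> 'a set set \<Rightarrow> bool" where
  "bornology S Bor \<longleftrightarrow> (\<forall>B\<in>Bor. B \<subseteq> S) \<and> \<Union>Bor = S \<and>
     (\<forall>B\<in>Bor. \<forall>C. C \<subseteq> B \<longrightarrow> C \<in> Bor) \<and>
     (\<forall>B\<in>Bor. \<forall>C\<in>Bor. B \<union> C \<in> Bor)"

definition large_scale_group :: "('a, 'b) monoid_scheme \<Rightarrow> 'a set set \<Rightarrow> bool" where
  "large_scale_group G Bor \<longleftrightarrow> group G \<and> bornology (carrier G) Bor \<and>
     (\<forall>B\<in>Bor. set_inv\<^bsub>G\<^esub> B \<in> Bor) \<and>
     (\<forall>B\<in>Bor. \<forall>C\<in>Bor. B <#>\<^bsub>G\<^esub> C \<in> Bor)"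

text \<open>Induced large scale structure on a subgroup H.\<close>
definition induced_bornology :: "'a set set \<Rightarrow> 'a set \<Rightarrow> 'a set set" where
  "induced_bornology Bor H = {B \<in> Bor. B \<subseteq> H}"

definition unif_bounded :: "('a, 'b) monoid_scheme \<Rightarrow> 'a set set \<Rightarrow> 'a set set \<Rightarrow> bool" where
  "unif_bounded G Bor Us \<longleftrightarrow> (\<forall>U\<in>Us. U \<subseteq> carrier G) \<and> \<Union>Us = carrier G \<and>
     (\<exists>B\<in>Bor. \<forall>U\<in>Us. \<exists>g\<in>carrier G. U \<subseteq> g <#\<^bsub>G\<^esub> B)"

definition star :: "'a set \<Rightarrow> 'a set set \<Rightarrow> 'a set" where
  "star A Us = \<Union>{U \<in> Us. U \<inter> A \<noteq> {}}"

definition coarsely_clopen :: "('a, 'b) monoid_scheme \<Rightarrow> 'a set set \<Rightarrow> 'a set \<Rightarrow> bool" where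
  "coarsely_clopen G Bor A \<longleftrightarrow> A \<subseteq> carrier G \<and>
     (\<forall>Us. unif_bounded G Bor Us \<longrightarrow> star A Us \<inter> star (carrier G - A) Us \<in> Bor)"

definition fin_int_unbounded :: "'a set \<Rightarrow> 'a set set \<Rightarrow> 'a set set \<Rightarrow> bool" where
  "fin_int_unbounded S Bor Es \<longleftrightarrow>
     (\<forall>Fs. Fs \<subseteq> Es \<and> finite Fs \<longrightarrow> S \<inter> \<Inter>Fs \<notin> Bor)"

definition is_end :: "('a, 'b) monoid_scheme \<Rightarrow> 'a set set \<Rightarrow> 'a set set \<Rightarrow> bool" where
  "is_end G Bor Es \<longleftrightarrow>
     (\<forall>A\<in>Es. coarsely_clopen G Bor A \<and> A \<notin> Bor) \<and>
     fin_int_unbounded (carrier G) Bor Es \<and>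
     (\<forall>Es'. Es \<subseteq> Es' \<and> (\<forall>A\<in>Es'. coarsely_clopen G Bor A \<and> A \<notin> Bor) \<and>
        fin_int_unbounded (carrier G) Bor Es' \<longrightarrow> Es' = Es)"

definition ends :: "('a, 'b) monoid_scheme \<Rightarrow> 'a set set \<Rightarrow> 'a set set set" where
  "ends G Bor = {Es. is_end G Bor Es}"

definition num_ends :: "('a, 'b) monoid_scheme \<Rightarrow> 'a set set \<Rightarrow> enat" where
  "num_ends G Bor = (if finite (ends G Bor) then enat (card (ends G Bor)) else \<infinity>)"

definition boundedly_generated :: "('a, 'b) monoid_scheme \<Rightarrow> 'a set set \<Rightarrow> 'a set \<Rightarrow> bool" where
  "boundedly_generated G Bor H \<longleftrightarrow> subgroup H G \<and>
     (\<exists>S\<in>Bor. set_inv\<^bsub>G\<^esub> S = S \<and> generate G S = H)"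

definition bg_basis :: "('a, 'b) monoid_scheme \<Rightarrow> 'a set set \<Rightarrow> (nat \<Rightarrow> 'a set) \<Rightarrow> bool" where
  "bg_basis G Bor Gs \<longleftrightarrow> (\<forall>i\<ge>1. boundedly_generated G Bor (Gs i)) \<and>
     (\<forall>B\<in>Bor. \<exists>i\<ge>1. B \<subseteq> Gs i)"

end

theory Submission
  imports Defs
begin

lemma bor_sub: "bornology S Bor \<Longrightarrow> B \<in> Bor \<Longrightarrow> C \<subseteq> B \<Longrightarrow> C \<in> Bor"
  unfolding bornology_def by blast

lemma bor_Un: "bornology S Bor \<Longrightarrow> B \<in> Bor \<Longrightarrow> C \<in> Bor \<Longrightarrow> B \<union> C \<in> Bor"
  unfolding bornology_def by blast

lemma bor_single: "bornology S Bor \<Longrightarrow> x \<in> S \<Longrightarrow> {x} \<in> Bor"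
  unfolding bornology_def by blast

lemma bor_empty: "bornology S Bor \<Longrightarrow> x \<in> S \<Longrightarrow> {} \<in> Bor"
  unfolding bornology_def by blast

lemma bor_subS: "bornology S Bor \<Longrightarrow> B \<in> Bor \<Longrightarrow> B \<subseteq> S"
  unfolding bornology_def by blast

lemma cc_Int:
  assumes bor: "bornology (carrier G) Bor"
    and a: "coarsely_clopen G Bor A" and b: "coarsely_clopen G Bor B"
  shows "coarsely_clopen G Bor (A \<inter> B)"
  unfolding coarsely_clopen_def
proof (intro conjI allI impI)
  show "A \<inter> B \<subseteq> carrier G" using a unfolding coarsely_clopen_def by blast
  fix Us assume u: "unif_bounded G Bor Us"
  have 1: "star A Us \<inter> star (carrier G - A) Us \<in> Bor"
    using a u unfolding coarsely_clopen_def by blast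
  have 2: "star B Us \<inter> star (carrier G - B) Us \<in> Bor"
    using b u unfolding coarsely_clopen_def by blast
  have "star (A \<inter> B) Us \<inter> star (carrier G - A \<inter> B) Us \<subseteq>
     (star A Us \<inter> star (carrier G - A) Us) \<union> (star B Us \<inter> star (carrier G - B) Us)"
    unfolding star_def by blast
  then show "star (A \<inter> B) Us \<inter> star (carrier G - A \<inter> B) Us \<in> Bor"
    using bor_sub[OF bor bor_Un[OF bor 1 2]] by blast
qed

lemma cc_carrier:
  assumes bor: "bornology (carrier G) Bor" and x: "x \<in> carrier G"
  shows "coarsely_clopen G Bor (carrier G)"
  unfolding coarsely_clopen_def
proof (intro conjI allI impI)
  fix Us
  have "star (carrier G - carrier G) Us = {}" unfolding star_def by blast
  then show "star (carrier G) Us \<inter> star (carrier G - carrier G) Us \<in> Bor"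
    using bor_empty[OF bor x] by simp
qed simp

lemma cc_Inter:
  assumes bor: "bornology (carrier G) Bor" and x: "x \<in> carrier G"
    and fin: "finite F" and cc: "\<forall>A\<in>F. coarsely_clopen G Bor A"
  shows "coarsely_clopen G Bor (carrier G \<inter> \<Inter>F)"
  using fin cc
proof (induction F rule: finite_induct)
  case empty then show ?case using cc_carrier[OF bor x] by simp
next
  case (insert A F)
  have sub: "A \<subseteq> carrier G" using insert.prems unfolding coarsely_clopen_def by blast
  have "carrier G \<inter> \<Inter>(insert A F) = A \<inter> (carrier G \<inter> \<Inter>F)" using sub by blast
  then show ?case using cc_Int[OF bor, of A "carrier G \<inter> \<Inter>F"] insert by simp
qed

lemma end_exists:
  assumes R: "\<forall>A\<in>R. coarsely_clopen G Bor A \<and> A \<notin> Bor"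
    and Rf: "fin_int_unbounded (carrier G) Bor R"
  shows "\<exists>E. is_end G Bor E \<and> R \<subseteq> E"
proof -
  define PP where "PP = {Es. R \<subseteq> Es \<and> (\<forall>A\<in>Es. coarsely_clopen G Bor A \<and> A \<notin> Bor) \<and>
      fin_int_unbounded (carrier G) Bor Es}"
  have RP: "R \<in> PP" using R Rf unfolding PP_def by blast
  have "\<exists>Mx\<in>PP. \<forall>Yy\<in>PP. Mx \<subseteq> Yy \<longrightarrow> Yy = Mx"
  proof (rule subset_Zorn)
    fix C assume ch: "subset.chain PP C"
    show "\<exists>U\<in>PP. \<forall>Yy\<in>C. Yy \<subseteq> U"
    proof (cases "C = {}")
      case True then show ?thesis using RP by blast
    next
      case False
      have CP: "C \<subseteq> PP" using ch unfolding subset_chain_def by blast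
      have "\<Union>C \<in> PP" unfolding PP_def
      proof (intro CollectI conjI)
        show "R \<subseteq> \<Union>C" using False CP unfolding PP_def by blast
        show "\<forall>A\<in>\<Union>C. coarsely_clopen G Bor A \<and> A \<notin> Bor" using CP unfolding PP_def by blast
        show "fin_int_unbounded (carrier G) Bor (\<Union>C)"
          unfolding fin_int_unbounded_def
        proof (intro allI impI)
          fix Fs assume h: "Fs \<subseteq> \<Union>C \<and> finite Fs"
          then have h1: "finite Fs" and h2: "Fs \<subseteq> \<Union>C" by auto
          obtain B where B: "B \<in> C" "Fs \<subseteq> B"
            using finite_subset_Union_chain[OF h1 h2 False ch] by metis
          have "B \<in> PP" using B(1) CP by blast
          then have "fin_int_unbounded (carrier G) Bor B" unfolding PP_def by simp
          then show "carrier G \<inter> \<Inter>Fs \<notin> Bor" using B(2) h1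
            unfolding fin_int_unbounded_def by blast
        qed
      qed
      then show ?thesis by blast
    qed
  qed
  then obtain Mx where Mx: "Mx \<in> PP" "\<forall>Yy\<in>PP. Mx \<subseteq> Yy \<longrightarrow> Yy = Mx" by blast
  have "is_end G Bor Mx" unfolding is_end_def
  proof (intro conjI allI impI)
    show "\<forall>A\<in>Mx. coarsely_clopen G Bor A \<and> A \<notin> Bor" using Mx unfolding PP_def by blast
    show "fin_int_unbounded (carrier G) Bor Mx" using Mx unfolding PP_def by blast
    fix Es' assume h: "Mx \<subseteq> Es' \<and> (\<forall>A\<in>Es'. coarsely_clopen G Bor A \<and> A \<notin> Bor) \<and>
        fin_int_unbounded (carrier G) Bor Es'"
    then have "Es' \<in> PP" using Mx unfolding PP_def by blast
    then show "Es' = Mx" using Mx h by blast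
  qed
  then show ?thesis using Mx unfolding PP_def by blast
qed


lemma sep1:
  assumes bor: "bornology (carrier G) Bor"
    and e: "is_end G Bor E" and e': "is_end G Bor E'" and A: "A \<in> E" "A \<notin> E'"
  shows "\<exists>F'. finite F' \<and> F' \<subseteq> E' \<and> carrier G \<inter> A \<inter> \<Inter>F' \<in> Bor"
proof -
  have v: "\<forall>B\<in>insert A E'. coarsely_clopen G Bor B \<and> B \<notin> Bor"
    using e e' A unfolding is_end_def by blast
  have "insert A E' \<noteq> E'" using A by blast
  then have "\<not> fin_int_unbounded (carrier G) Bor (insert A E')"
    using e' v unfolding is_end_def by blast
  then obtain Fs where Fs: "Fs \<subseteq> insert A E'" "finite Fs" "carrier G \<inter> \<Inter>Fs \<in> Bor"
    unfolding fin_int_unbounded_def by blast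
  have "carrier G \<inter> A \<inter> \<Inter>(Fs - {A}) \<subseteq> carrier G \<inter> \<Inter>Fs" by blast
  then have "carrier G \<inter> A \<inter> \<Inter>(Fs - {A}) \<in> Bor" using bor_sub[OF bor Fs(3)] by blast
  moreover have "finite (Fs - {A})" "Fs - {A} \<subseteq> E'" using Fs by auto
  ultimately show ?thesis by blast
qed

lemma sep:
  assumes bor: "bornology (carrier G) Bor"
    and e: "is_end G Bor E" and e': "is_end G Bor E'" and ne: "E \<noteq> E'"
  shows "\<exists>p. finite (fst p) \<and> fst p \<subseteq> E \<and> finite (snd p) \<and> snd p \<subseteq> E' \<and>
            carrier G \<inter> \<Inter>(fst p) \<inter> \<Inter>(snd p) \<in> Bor"
proof -
  have "\<not> E \<subseteq> E'"
  proof
    assume "E \<subseteq> E'"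
    then have "E' = E" using e e' unfolding is_end_def by blast
    then show False using ne by simp
  qed
  then obtain A where A: "A \<in> E" "A \<notin> E'" by blast
  obtain F' where F': "finite F'" "F' \<subseteq> E'" "carrier G \<inter> A \<inter> \<Inter>F' \<in> Bor"
    using sep1[OF bor e e' A] by blast
  have "carrier G \<inter> \<Inter>(fst ({A}, F')) \<inter> \<Inter>(snd ({A}, F')) = carrier G \<inter> A \<inter> \<Inter>F'" by auto
  then show ?thesis using F' A by (intro exI[of _ "({A}, F')"]) auto
qed

lemma cc_restrict:
  assumes lsg: "large_scale_group G Bor" and H: "H \<subseteq> carrier G"
    and cc: "coarsely_clopen G Bor A"
  shows "coarsely_clopen (G\<lparr>carrier := H\<rparr>) (induced_bornology Bor H) (A \<inter> H)"
proof -
  interpret group G using lsg unfolding large_scale_group_def by blast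
  have bor: "bornology (carrier G) Bor" using lsg unfolding large_scale_group_def by blast
  show ?thesis unfolding coarsely_clopen_def
  proof (intro conjI allI impI)
    show "A \<inter> H \<subseteq> carrier (G\<lparr>carrier := H\<rparr>)" by simp
    fix Us assume u: "unif_bounded (G\<lparr>carrier := H\<rparr>) (induced_bornology Bor H) Us"
    then have uH: "\<forall>U\<in>Us. U \<subseteq> H" and uc: "\<Union>Us = H"
      unfolding unif_bounded_def by auto
    from u obtain B where B: "B \<in> Bor" "B \<subseteq> H" and UB: "\<forall>U\<in>Us. \<exists>g\<in>H. U \<subseteq> g <#\<^bsub>G\<^esub> B"
      unfolding unif_bounded_def induced_bornology_def l_coset_def by auto
    define B' where "B' = B \<union> {\<one>\<^bsub>G\<^esub>}"
    have B': "B' \<in> Bor" using bor_Un[OF bor B(1) bor_single[OF bor one_closed]] B'_def by simp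
    define Us' where "Us' = Us \<union> (\<lambda>x. {x}) ` (carrier G - H)"
    have u': "unif_bounded G Bor Us'" unfolding unif_bounded_def
    proof (intro conjI)
      show "\<forall>U\<in>Us'. U \<subseteq> carrier G" using uH H unfolding Us'_def by auto
      show "\<Union>Us' = carrier G" using uc H unfolding Us'_def by auto
      show "\<exists>B\<in>Bor. \<forall>U\<in>Us'. \<exists>g\<in>carrier G. U \<subseteq> g <#\<^bsub>G\<^esub> B"
      proof (intro bexI[OF _ B'] ballI)
        fix U assume "U \<in> Us'"
        then show "\<exists>g\<in>carrier G. U \<subseteq> g <#\<^bsub>G\<^esub> B'"
          unfolding Us'_def
        proof
          assume "U \<in> Us"
          then obtain g where "g \<in> H" "U \<subseteq> g <#\<^bsub>G\<^esub> B" using UB by blast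
          moreover have "g <#\<^bsub>G\<^esub> B \<subseteq> g <#\<^bsub>G\<^esub> B'" unfolding l_coset_def B'_def by blast
          ultimately show ?thesis using H by blast
        next
          assume "U \<in> (\<lambda>x. {x}) ` (carrier G - H)"
          then obtain x where x: "x \<in> carrier G" "U = {x}" by blast
          moreover have "x \<in> x <#\<^bsub>G\<^esub> B'" unfolding l_coset_def B'_def using x by force
          ultimately show ?thesis by blast
        qed
      qed
    qed
    have W: "star A Us' \<inter> star (carrier G - A) Us' \<in> Bor"
      using cc u' unfolding coarsely_clopen_def by blast
    have s1: "star (A \<inter> H) Us \<subseteq> star A Us'" unfolding star_def Us'_def by blast
    have s2: "star (carrier (G\<lparr>carrier := H\<rparr>) - A \<inter> H) Us \<subseteq> star (carrier G - A) Us'"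
      unfolding star_def Us'_def by (rule Union_mono) (use uH H in auto)
    have s3: "star (A \<inter> H) Us \<subseteq> H" using uH unfolding star_def by blast
    show "star (A \<inter> H) Us \<inter> star (carrier (G\<lparr>carrier := H\<rparr>) - A \<inter> H) Us
          \<in> induced_bornology Bor H"
      unfolding induced_bornology_def using bor_sub[OF bor W] s1 s2 s3 by blast
  qed
qed


lemma lemB:
  assumes lsg: "large_scale_group G Bor" and bas: "bg_basis G Bor Gs"
    and unb: "\<forall>i\<ge>1. Gs i \<notin> Bor"
    and cc: "coarsely_clopen G Bor C" and Cu: "C \<notin> Bor"
  shows "\<exists>j\<ge>1. C \<inter> Gs j \<notin> Bor"
proof -
  interpret group G using lsg unfolding large_scale_group_def by blast
  have bor: "bornology (carrier G) Bor" using lsg unfolding large_scale_group_def by blast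
  have bmul: "\<forall>B\<in>Bor. \<forall>C\<in>Bor. B <#>\<^bsub>G\<^esub> C \<in> Bor"
    using lsg unfolding large_scale_group_def by blast
  have bg1: "boundedly_generated G Bor (Gs 1)" using bas unfolding bg_basis_def by simp
  then obtain S where S: "S \<in> Bor" "set_inv\<^bsub>G\<^esub> S = S" "generate G S = Gs 1"
    and sg1: "subgroup (Gs 1) G"
    unfolding boundedly_generated_def by blast
  have basB: "\<forall>B\<in>Bor. \<exists>i\<ge>1. B \<subseteq> Gs i" using bas unfolding bg_basis_def by blast
  have sgall: "\<And>i. i \<ge> 1 \<Longrightarrow> subgroup (Gs i) G"
    using bas unfolding bg_basis_def boundedly_generated_def by blast
  have Sc: "S \<subseteq> carrier G" using bor_subS[OF bor S(1)] .
  define B where "B = S \<union> {\<one>\<^bsub>G\<^esub>}"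
  have BB: "B \<in> Bor" using bor_Un[OF bor S(1) bor_single[OF bor one_closed]] B_def by simp
  have Bc: "B \<subseteq> carrier G" using Sc B_def by auto
  define Us where "Us = (\<lambda>g. g <#\<^bsub>G\<^esub> B) ` carrier G"
  have gin: "g \<in> g <#\<^bsub>G\<^esub> B" if "g \<in> carrier G" for g
    unfolding l_coset_def B_def using that by force
  have u: "unif_bounded G Bor Us" unfolding unif_bounded_def
  proof (intro conjI)
    show U1: "\<forall>U\<in>Us. U \<subseteq> carrier G" unfolding Us_def l_coset_def using Bc by auto
    show "\<Union>Us = carrier G"
    proof
      show "\<Union>Us \<subseteq> carrier G" using U1 by blast
      show "carrier G \<subseteq> \<Union>Us" unfolding Us_def using gin by blast
    qed
    show "\<exists>B\<in>Bor. \<forall>U\<in>Us. \<exists>g\<in>carrier G. U \<subseteq> g <#\<^bsub>G\<^esub> B"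
      using BB unfolding Us_def by blast
  qed
  have W: "star C Us \<inter> star (carrier G - C) Us \<in> Bor"
    using cc u unfolding coarsely_clopen_def by blast
  obtain k where k: "k \<ge> 1" "star C Us \<inter> star (carrier G - C) Us \<union> S \<subseteq> Gs k"
    using basB bor_Un[OF bor W S(1)] by blast
  have sgk: "subgroup (Gs k) G" using sgall k by blast
  have Sk: "S \<subseteq> Gs k" using k(2) by blast
  have G1k: "Gs 1 \<subseteq> Gs k" using generate_subgroup_incl[OF Sk sgk] S(3) by simp
  have Ccar: "C \<subseteq> carrier G" using cc unfolding coarsely_clopen_def by blast
  have G1c: "Gs 1 \<subseteq> carrier G" using subgroup.subset[OF sg1] .
  show ?thesis
  proof (cases "C \<subseteq> Gs k")
    case True
    then have "C \<inter> Gs k = C" by blast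
    then have "C \<inter> Gs k \<notin> Bor" using Cu by simp
    then show ?thesis using k(1) by blast
  next
    case False
    then obtain g where g: "g \<in> C" "g \<notin> Gs k" by blast
    have gc: "g \<in> carrier G" using g Ccar by blast
    have step: "x \<otimes>\<^bsub>G\<^esub> s \<in> C" if x: "x \<in> C" "x \<notin> Gs k" and s: "s \<in> S" for x s
    proof (rule ccontr)
      assume nc: "x \<otimes>\<^bsub>G\<^esub> s \<notin> C"
      have xc: "x \<in> carrier G" using x Ccar by blast
      have sc: "s \<in> carrier G" using s Sc by blast
      have inU: "x <#\<^bsub>G\<^esub> B \<in> Us" using Us_def xc by blast
      have "x \<otimes>\<^bsub>G\<^esub> s \<in> x <#\<^bsub>G\<^esub> B" unfolding l_coset_def B_def using s by blast
      then have "x \<in> star C Us \<inter> star (carrier G - C) Us"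
        unfolding star_def using inU gin[OF xc] x nc xc sc by blast
      then show False using k x by blast
    qed
    have key: "\<forall>x. x \<in> C \<and> x \<notin> Gs k \<longrightarrow> x \<otimes>\<^bsub>G\<^esub> h \<in> C" if "h \<in> generate G S" for h
      using that
    proof (induction h rule: generate.induct)
      case one then show ?case using Ccar by auto
    next
      case (incl h) then show ?case using step by blast
    next
      case (inv h)
      then have "inv\<^bsub>G\<^esub> h \<in> S" using S(2) unfolding SET_INV_def by blast
      then show ?case using step by blast
    next
      case (eng h1 h2)
      show ?case
      proof (intro allI impI)
        fix x assume x: "x \<in> C \<and> x \<notin> Gs k"
        have xc: "x \<in> carrier G" using x Ccar by blast
        have h1: "h1 \<in> Gs 1" "h2 \<in> Gs 1" using eng.hyps S(3) by auto
        have h1c: "h1 \<in> carrier G" "h2 \<in> carrier G" using h1 G1c by auto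
        have xh1: "x \<otimes>\<^bsub>G\<^esub> h1 \<in> C" using eng.IH(1) x by blast
        have "x \<otimes>\<^bsub>G\<^esub> h1 \<notin> Gs k"
        proof
          assume a: "x \<otimes>\<^bsub>G\<^esub> h1 \<in> Gs k"
          have "inv\<^bsub>G\<^esub> h1 \<in> Gs k" using h1 G1k subgroup.m_inv_closed[OF sgk] by blast
          then have "x \<otimes>\<^bsub>G\<^esub> h1 \<otimes>\<^bsub>G\<^esub> inv\<^bsub>G\<^esub> h1 \<in> Gs k"
            using a subgroup.m_closed[OF sgk] by blast
          moreover have "x \<otimes>\<^bsub>G\<^esub> h1 \<otimes>\<^bsub>G\<^esub> inv\<^bsub>G\<^esub> h1 = x" using xc h1c by (simp add: m_assoc)
          ultimately show False using x by simp
        qed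
        then have "x \<otimes>\<^bsub>G\<^esub> h1 \<otimes>\<^bsub>G\<^esub> h2 \<in> C" using eng.IH(2) xh1 by blast
        then show "x \<otimes>\<^bsub>G\<^esub> (h1 \<otimes>\<^bsub>G\<^esub> h2) \<in> C" using m_assoc xc h1c by simp
      qed
    qed
    obtain j where j: "j \<ge> 1" "{g} \<union> S \<subseteq> Gs j"
      using basB bor_Un[OF bor bor_single[OF bor gc] S(1)] by blast
    have sgj: "subgroup (Gs j) G" using sgall j by blast
    have Sj: "S \<subseteq> Gs j" using j(2) by blast
    have G1j: "Gs 1 \<subseteq> Gs j" using generate_subgroup_incl[OF Sj sgj] S(3) by simp
    have "C \<inter> Gs j \<notin> Bor"
    proof
      assume T: "C \<inter> Gs j \<in> Bor"
      have "{inv\<^bsub>G\<^esub> g} <#>\<^bsub>G\<^esub> (C \<inter> Gs j) \<in> Bor"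
        using bmul T bor_single[OF bor inv_closed[OF gc]] by blast
      moreover have "Gs 1 \<subseteq> {inv\<^bsub>G\<^esub> g} <#>\<^bsub>G\<^esub> (C \<inter> Gs j)"
      proof
        fix h assume h: "h \<in> Gs 1"
        have hc: "h \<in> carrier G" using h G1c by blast
        have "g \<otimes>\<^bsub>G\<^esub> h \<in> C" using key[of h] S(3) g h by auto
        moreover have "g \<otimes>\<^bsub>G\<^esub> h \<in> Gs j" using subgroup.m_closed[OF sgj] j G1j h by blast
        moreover have "inv\<^bsub>G\<^esub> g \<otimes>\<^bsub>G\<^esub> (g \<otimes>\<^bsub>G\<^esub> h) = h"
          using gc hc by (simp add: m_assoc[symmetric])
        ultimately show "h \<in> {inv\<^bsub>G\<^esub> g} <#>\<^bsub>G\<^esub> (C \<inter> Gs j)"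
          unfolding set_mult_def by force
      qed
      ultimately have "Gs 1 \<in> Bor" using bor_sub[OF bor] by blast
      then show False using unb by simp
    qed
    then show ?thesis using j by blast
  qed
qed

lemma dir2:
  assumes lsg: "large_scale_group G Bor" and bas: "bg_basis G Bor Gs"
    and a: "a \<ge> 1" and b: "b \<ge> 1"
  shows "\<exists>k\<ge>1. Gs a \<subseteq> Gs k \<and> Gs b \<subseteq> Gs k"
proof -
  interpret group G using lsg unfolding large_scale_group_def by blast
  have bor: "bornology (carrier G) Bor" using lsg unfolding large_scale_group_def by blast
  have bgall: "\<And>i. i \<ge> 1 \<Longrightarrow> boundedly_generated G Bor (Gs i)"
    using bas unfolding bg_basis_def by blast
  have basB: "\<forall>B\<in>Bor. \<exists>i\<ge>1. B \<subseteq> Gs i" using bas unfolding bg_basis_def by blast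
  obtain Sa where Sa: "Sa \<in> Bor" "generate G Sa = Gs a"
    using bgall[OF a] unfolding boundedly_generated_def by blast
  obtain Sb where Sb: "Sb \<in> Bor" "generate G Sb = Gs b"
    using bgall[OF b] unfolding boundedly_generated_def by blast
  obtain k where k: "k \<ge> 1" "Sa \<union> Sb \<subseteq> Gs k"
    using basB bor_Un[OF bor Sa(1) Sb(1)] by blast
  have sgk: "subgroup (Gs k) G"
    using bgall[OF k(1)] unfolding boundedly_generated_def by blast
  have "Sa \<subseteq> Gs k" "Sb \<subseteq> Gs k" using k(2) by auto
  then have "generate G Sa \<subseteq> Gs k" "generate G Sb \<subseteq> Gs k"
    using generate_subgroup_incl sgk by blast+
  then show ?thesis using Sa(2) Sb(2) k(1) by auto
qed

lemma lemB_fin: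
  assumes lsg: "large_scale_group G Bor" and bas: "bg_basis G Bor Gs"
    and unb: "\<forall>i\<ge>1. Gs i \<notin> Bor"
    and fin: "finite XX" and XX: "\<forall>C\<in>XX. coarsely_clopen G Bor C \<and> C \<notin> Bor"
  shows "\<exists>j\<ge>1. \<forall>C\<in>XX. C \<inter> Gs j \<notin> Bor"
  using fin XX
proof (induction XX rule: finite_induct)
  case empty
  have grp: "group G" using lsg by (simp add: large_scale_group_def)
  have bor: "bornology (carrier G) Bor" using lsg by (simp add: large_scale_group_def)
  have oc: "\<one>\<^bsub>G\<^esub> \<in> carrier G" by (rule monoid.one_closed[OF group.is_monoid[OF grp]])
  have e: "{} \<in> Bor" by (rule bor_empty[OF bor oc])
  from bas have "\<forall>B\<in>Bor. \<exists>i\<ge>1. B \<subseteq> Gs i" by (simp add: bg_basis_def)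
  from this[rule_format, OF e] obtain i where "i \<ge> 1" "{} \<subseteq> Gs i" by blast
  then show ?case by (intro exI[of _ i]) simp
next
  case (insert C XX)
  have bor: "bornology (carrier G) Bor" using lsg unfolding large_scale_group_def by blast
  have pX: "\<forall>C\<in>XX. coarsely_clopen G Bor C \<and> C \<notin> Bor" using insert.prems by simp
  have pC: "coarsely_clopen G Bor C" "C \<notin> Bor" using insert.prems by simp_all
  obtain j where j: "j \<ge> 1" "\<forall>C\<in>XX. C \<inter> Gs j \<notin> Bor" using insert.IH[OF pX] by blast
  obtain j' where j': "j' \<ge> 1" "C \<inter> Gs j' \<notin> Bor" using lemB[OF lsg bas unb pC] by blast
  obtain k where k: "k \<ge> 1" "Gs j \<subseteq> Gs k" "Gs j' \<subseteq> Gs k" using dir2[OF lsg bas j(1) j'(1)] by blast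
  have mono: "D \<inter> Gs k \<notin> Bor" if "D \<inter> Gs i \<notin> Bor" "Gs i \<subseteq> Gs k" for D i
  proof
    assume "D \<inter> Gs k \<in> Bor"
    moreover have "D \<inter> Gs i \<subseteq> D \<inter> Gs k" using that(2) by blast
    ultimately have "D \<inter> Gs i \<in> Bor" by (rule bor_sub[OF bor])
    then show False using that(1) by simp
  qed
  have "\<forall>D\<in>insert C XX. D \<inter> Gs k \<notin> Bor"
  proof
    fix D assume D: "D \<in> insert C XX"
    show "D \<inter> Gs k \<notin> Bor"
    proof (cases "D = C")
      case True then show ?thesis using mono[OF j'(2) k(3)] by simp
    next
      case False then have "D \<in> XX" using D by simp
      then show ?thesis using mono[OF _ k(2)] j(2) by blast
    qed
  qed
  then show ?case using k(1) by blast
qed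


theorem theorem9p6:
  fixes G :: "('a, 'b) monoid_scheme" and Bor :: "'a set set"
    and Gs :: "nat \<Rightarrow> 'a set" and m :: enat
  assumes "large_scale_group G Bor"
    and "bg_basis G Bor Gs"
    and "\<forall>i\<ge>1. Gs i \<notin> Bor"
    and "\<forall>i\<ge>1. num_ends (G\<lparr>carrier := Gs i\<rparr>) (induced_bornology Bor (Gs i)) \<le> m"
  shows "num_ends G Bor \<le> m"
proof (cases m)
  case infinity
  then show ?thesis by simp
next
  case (enat n)
  note lsg = assms(1) and bas = assms(2) and unb = assms(3) and hm = assms(4)
  have grp: "group G" using lsg by (simp add: large_scale_group_def)
  have bor: "bornology (carrier G) Bor" using lsg by (simp add: large_scale_group_def)
  have oc: "\<one>\<^bsub>G\<^esub> \<in> carrier G" by (rule monoid.one_closed[OF group.is_monoid[OF grp]])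
  show ?thesis
  proof (rule ccontr)
    assume neg: "\<not> num_ends G Bor \<le> m"
    have "\<exists>Fe. finite Fe \<and> card Fe = Suc n \<and> Fe \<subseteq> ends G Bor"
    proof (cases "finite (ends G Bor)")
      case True
      then have "Suc n \<le> card (ends G Bor)" using neg enat unfolding num_ends_def by auto
      then show ?thesis using obtain_subset_with_card_n by metis
    next
      case False
      then show ?thesis using infinite_arbitrarily_large by blast
    qed
    then obtain Fe where Fe: "finite Fe" "card Fe = Suc n" "Fe \<subseteq> ends G Bor" by blast
    have isend: "\<And>E. E \<in> Fe \<Longrightarrow> is_end G Bor E" using Fe(3) unfolding ends_def by auto
    define PS where "PS E E' p \<longleftrightarrow> finite (fst p) \<and> fst p \<subseteq> E \<and> finite (snd p) \<and> snd p \<subseteq> E' \<and>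
            carrier G \<inter> \<Inter>(fst p) \<inter> \<Inter>(snd p) \<in> Bor" for E E' :: "'a set set" and p
    define s where "s E E' = (SOME p. PS E E' p)" for E E'
    have sP: "PS E E' (s E E')" if "E \<in> Fe" "E' \<in> Fe" "E \<noteq> E'" for E E'
    proof -
      have "\<exists>p. PS E E' p" unfolding PS_def using sep[OF bor isend[OF that(1)] isend[OF that(2)] that(3)] .
      then show ?thesis unfolding s_def by (rule someI_ex)
    qed
    define FE where "FE E = (\<Union>E'\<in>Fe - {E}. fst (s E E') \<union> snd (s E' E))" for E
    define CE where "CE E = carrier G \<inter> \<Inter>(FE E)" for E
    have FEf: "finite (FE E)" "FE E \<subseteq> E" if "E \<in> Fe" for E
    proof -
      have "\<forall>E'\<in>Fe - {E}. finite (fst (s E E') \<union> snd (s E' E)) \<and> fst (s E E') \<union> snd (s E' E) \<subseteq> E"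
        using sP that unfolding PS_def by auto
      then show "finite (FE E)" "FE E \<subseteq> E" unfolding FE_def using Fe(1) by auto
    qed
    have CEcc: "coarsely_clopen G Bor (CE E)" if "E \<in> Fe" for E
    proof -
      have "\<forall>A\<in>FE E. coarsely_clopen G Bor A"
        using FEf(2)[OF that] isend[OF that] unfolding is_end_def by blast
      then show ?thesis unfolding CE_def using cc_Inter[OF bor oc FEf(1)[OF that]] by blast
    qed
    have CEu: "CE E \<notin> Bor" if "E \<in> Fe" for E
    proof -
      have "fin_int_unbounded (carrier G) Bor E" using isend[OF that] unfolding is_end_def by blast
      then show ?thesis unfolding CE_def fin_int_unbounded_def using FEf[OF that] by blast
    qed
    have CEsep: "CE E \<inter> CE E' \<in> Bor" if "E \<in> Fe" "E' \<in> Fe" "E \<noteq> E'" for E E'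
    proof -
      have p: "PS E E' (s E E')" using sP that by blast
      have "fst (s E E') \<subseteq> FE E" unfolding FE_def using that by blast
      moreover have "snd (s E E') \<subseteq> FE E'" unfolding FE_def using that by blast
      ultimately have "CE E \<inter> CE E' \<subseteq> carrier G \<inter> \<Inter>(fst (s E E')) \<inter> \<Inter>(snd (s E E'))"
        unfolding CE_def by blast
      then show ?thesis using bor_sub[OF bor] p unfolding PS_def by blast
    qed
    have "\<exists>j\<ge>1. \<forall>C\<in>CE ` Fe. C \<inter> Gs j \<notin> Bor"
      using lemB_fin[OF lsg bas unb] Fe(1) CEcc CEu by blast
    then obtain j where j: "j \<ge> 1" "\<And>E. E \<in> Fe \<Longrightarrow> CE E \<inter> Gs j \<notin> Bor" by blast
    define H where "H = Gs j"
    define G' where "G' = G\<lparr>carrier := H\<rparr>"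
    define Bor' where "Bor' = induced_bornology Bor H"
    have sgj: "subgroup (Gs j) G" using bas j(1) unfolding bg_basis_def boundedly_generated_def by blast
    have Hc: "H \<subseteq> carrier G" using subgroup.subset[OF sgj] H_def by simp
    have HBor: "H \<notin> Bor" using unb j(1) H_def by simp
    have cG': "carrier G' = H" unfolding G'_def by simp
    have inB': "Y \<in> Bor' \<longleftrightarrow> Y \<in> Bor \<and> Y \<subseteq> H" for Y unfolding Bor'_def induced_bornology_def by simp
    have ex: "\<exists>E2. is_end G' Bor' E2 \<and> CE E \<inter> H \<in> E2" if "E \<in> Fe" for E
    proof -
      have D1: "coarsely_clopen G' Bor' (CE E \<inter> H)"
        unfolding G'_def Bor'_def using cc_restrict[OF lsg Hc CEcc[OF that]] .
      have D2: "CE E \<inter> H \<notin> Bor'" using j(2)[OF that] inB' H_def by simp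
      have D3: "fin_int_unbounded (carrier G') Bor' {CE E \<inter> H}"
        unfolding fin_int_unbounded_def
      proof (intro allI impI)
        fix Fs assume "Fs \<subseteq> {CE E \<inter> H} \<and> finite Fs"
        then have "Fs = {} \<or> Fs = {CE E \<inter> H}" by blast
        then show "carrier G' \<inter> \<Inter>Fs \<notin> Bor'"
        proof
          assume "Fs = {}" then show ?thesis using cG' HBor inB' by simp
        next
          assume "Fs = {CE E \<inter> H}"
          then have "carrier G' \<inter> \<Inter>Fs = CE E \<inter> H" using cG' by auto
          then show ?thesis using D2 by simp
        qed
      qed
      show ?thesis using end_exists[of "{CE E \<inter> H}" G' Bor'] D1 D2 D3 by blast
    qed
    then obtain f where f: "\<And>E. E \<in> Fe \<Longrightarrow> is_end G' Bor' (f E) \<and> CE E \<inter> H \<in> f E"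
      by metis
    have inj: "inj_on f Fe"
    proof (rule inj_onI)
      fix E E' assume E: "E \<in> Fe" "E' \<in> Fe" "f E = f E'"
      show "E = E'"
      proof (rule ccontr)
        assume ne: "E \<noteq> E'"
        have "fin_int_unbounded (carrier G') Bor' (f E)" using f[OF E(1)] unfolding is_end_def by blast
        moreover have "{CE E \<inter> H, CE E' \<inter> H} \<subseteq> f E" using f E by auto
        ultimately have "carrier G' \<inter> \<Inter>{CE E \<inter> H, CE E' \<inter> H} \<notin> Bor'"
          unfolding fin_int_unbounded_def by blast
        moreover have "carrier G' \<inter> \<Inter>{CE E \<inter> H, CE E' \<inter> H} \<subseteq> CE E \<inter> CE E'"
          "carrier G' \<inter> \<Inter>{CE E \<inter> H, CE E' \<inter> H} \<subseteq> H" using cG' by auto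
        ultimately show False using bor_sub[OF bor CEsep[OF E(1,2) ne]] inB' by blast
      qed
    qed
    have sub: "f ` Fe \<subseteq> ends G' Bor'" using f unfolding ends_def by auto
    have "num_ends G' Bor' \<le> enat n" using hm j(1) enat unfolding G'_def Bor'_def H_def by simp
    then have fin': "finite (ends G' Bor')" and cn: "card (ends G' Bor') \<le> n"
      unfolding num_ends_def by (auto split: if_splits)
    have "card (f ` Fe) = Suc n" using card_image[OF inj] Fe(2) by simp
    moreover have "card (f ` Fe) \<le> card (ends G' Bor')" using card_mono[OF fin' sub] .
    ultimately show False using cn by simp
  qed
qed

end
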